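(* Let $0<R_1<R$ and $S=\{z\in\mathbb{C}:|z|=R,\ \mathrm{Re}(z)\ge0\}$. There exists a constant $C=C(R_1,R)>0$ with the following property: if $R_2>R$, $\Omega=\{z:R_1<|z|<R_2\}\setminus(-R_2,-R_1)$, $T=\{z:|z|=R_2\}$ and $z\in S$, then $$\omega(z,T,\Omega)\ge\frac{C}{\sqrt{R_2}}.$$
   Context: $\omega(z,E,U)$ denotes the harmonic measure of a Borel set $E\subset\partial U$ with respect to the domain $U$, evaluated at $z\in U$. *)

theory Defs
  imports "HOL-Analysis.Analysis"
begin

definition lsc_on :: "complex set \<Rightarrow> (complex \<Rightarrow> real) \<Rightarrow> bool" where
  "lsc_on U v \<longleftrightarrow> (\<forall>w\<in>U. \<forall>c. c < v w \<longrightarrow> (\<forall>\<^sub>F x in at w within U. c < v x))"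

definition superharmonic_on :: "complex set \<Rightarrow> (complex \<Rightarrow> real) \<Rightarrow> bool" where
  "superharmonic_on U v \<longleftrightarrow> lsc_on U v \<and>
     (\<forall>w\<in>U. \<exists>\<rho>>0. \<forall>r. 0 < r \<and> r < \<rho> \<longrightarrow>
        v w \<ge> (1 / (2 * pi)) * integral {0..2*pi} (\<lambda>t. v (w + complex_of_real r * cis t)))"

text \<open>Harmonic measure \<omega>(z,E,U), defined as the (upper) Perron solution of the Dirichlet
  problem with boundary data the indicator function of E: the infimum of v(z) over bounded
  superharmonic v on U with liminf_{w\<rightarrow>\<zeta>, w\<in>U} v(w) \<ge> 1_E(\<zeta>) for every \<zeta> \<in> \<partial>U.\<close>
definition harmonic_measure :: "complex \<Rightarrow> complex set \<Rightarrow> complex set \<Rightarrow> real" where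
  "harmonic_measure z E U = Inf {v z | v. bounded (v ` U) \<and> superharmonic_on U v \<and>
     (\<forall>\<zeta>\<in>frontier U. \<forall>\<epsilon>>0. \<forall>\<^sub>F w in at \<zeta> within U. indicator E \<zeta> - \<epsilon> < v w)}"

end

theory Submission
  imports Defs "HOL-Complex_Analysis.Complex_Analysis"
begin


lemma mean_value_Re:
  assumes hol: "G holomorphic_on A" and opA: "open A" and sub: "cball w r \<subseteq> A" and r: "0 < r"
  shows "((\<lambda>t. Re (G (w + complex_of_real r * cis t))) has_integral (2*pi*Re (G w))) {0..2*pi}"
proof -
  have "G holomorphic_on cball w r" using hol sub holomorphic_on_subset by blast
  then have "((\<lambda>u. G u/(u-w)) has_contour_integral (2 * of_real pi * \<i> * G w)) (circlepath w r)"
    using Cauchy_integral_circlepath_simple r by simp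
  then have "((\<lambda>t. G (w + r * cis t)/(w + r * cis t - w) * r * \<i> * cis t) has_integral (2 * of_real pi * \<i> * G w)) {0..2*pi}"
    unfolding circlepath_def by (subst (asm) has_contour_integral_part_circlepath_iff) auto
  moreover have "(\<lambda>t. G (w + r * cis t)/(w + r * cis t - w) * r * \<i> * cis t) = (\<lambda>t. \<i> * G (w + r * cis t))"
    using r by (auto simp add: field_simps)
  ultimately have "((\<lambda>t. \<i> * G (w + r * cis t)) has_integral (2 * of_real pi * \<i> * G w)) {0..2*pi}"
    by simp
  then have "((\<lambda>t. (-\<i>) * (\<i> * G (w + r * cis t))) has_integral (-\<i>) * (2 * of_real pi * \<i> * G w)) {0..2*pi}"
    by (rule has_integral_mult_right)
  then have "((\<lambda>t. G (w + r * cis t)) has_integral (2 * of_real pi * G w)) {0..2*pi}"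
    by (simp add: algebra_simps)
  then have "((\<lambda>t. Re (G (w + r * cis t))) has_integral Re (2 * of_real pi * G w)) {0..2*pi}"
    using has_integral_linear[OF _ bounded_linear_Re] unfolding o_def by blast
  then show ?thesis by simp
qed


lemma lsc_integrable:
  fixes g :: "real \<Rightarrow> real"
  assumes bnd: "\<And>t. t \<in> {a..b} \<Longrightarrow> \<bar>g t\<bar> \<le> B"
    and lsc: "\<And>t c. t \<in> {a..b} \<Longrightarrow> c < g t \<Longrightarrow> \<exists>d>0. \<forall>s\<in>{a..b}. dist s t < d \<longrightarrow> c < g s"
  shows "g integrable_on {a..b}"
proof (rule measurable_bounded_by_integrable_imp_integrable_real[where g="\<lambda>_. B"])
  show "(\<lambda>_. B) integrable_on {a..b}" by (rule integrable_const_ivl)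
  show "{a..b} \<in> sets lebesgue" by simp
  show "\<And>x. x \<in> {a..b} \<Longrightarrow> \<bar>g x\<bar> \<le> B" by (rule bnd)
  show "g \<in> borel_measurable (lebesgue_on {a..b})"
    unfolding borel_measurable_iff_greater
  proof
    fix c
    define T where "T = \<Union>{ball t d | t d. t \<in> {a..b} \<and> d > 0 \<and> (\<forall>s\<in>{a..b}. dist s t < d \<longrightarrow> c < g s)}"
    have "open T" unfolding T_def by (rule open_Union) auto
    have eq: "{w \<in> space (lebesgue_on {a..b}). c < g w} = {a..b} \<inter> T"
    proof
      show "{w \<in> space (lebesgue_on {a..b}). c < g w} \<subseteq> {a..b} \<inter> T"
      proof
        fix w assume "w \<in> {w \<in> space (lebesgue_on {a..b}). c < g w}"
        then have w: "w \<in> {a..b}" "c < g w" by auto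
        obtain d where "d > 0" "\<forall>s\<in>{a..b}. dist s w < d \<longrightarrow> c < g s" using lsc[OF w] by blast
        then have "w \<in> ball w d" "ball w d \<in> {ball t d | t d. t \<in> {a..b} \<and> d > 0 \<and> (\<forall>s\<in>{a..b}. dist s t < d \<longrightarrow> c < g s)}"
          using w by auto
        then show "w \<in> {a..b} \<inter> T" unfolding T_def using w by blast
      qed
      show "{a..b} \<inter> T \<subseteq> {w \<in> space (lebesgue_on {a..b}). c < g w}"
        unfolding T_def by (auto simp: dist_commute)
    qed
    have "{a..b} \<inter> T \<in> sets (lebesgue_on {a..b})"
      unfolding sets_restrict_space using \<open>open T\<close> by (auto intro!: imageI)
    then show "{w \<in> space (lebesgue_on {a..b}). c < g w} \<in> sets (lebesgue_on {a..b})"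
      using eq by simp
  qed
qed


lemma circle_const:
  fixes f :: "complex \<Rightarrow> real"
  assumes r: "0 < r" and sub: "\<And>t. w + complex_of_real r * cis t \<in> U"
    and ge: "\<And>x. x \<in> U \<Longrightarrow> m \<le> f x"
    and lsc: "\<And>x c. x \<in> U \<Longrightarrow> c < f x \<Longrightarrow> \<exists>d>0. \<forall>y\<in>U. dist y x < d \<longrightarrow> c < f y"
    and int: "(\<lambda>t. f (w + complex_of_real r * cis t)) integrable_on {0..2*pi}"
    and mean: "(1/(2*pi)) * integral {0..2*pi} (\<lambda>t. f (w + complex_of_real r * cis t)) \<le> m"
    and t0: "t0 \<in> {0..2*pi}"
  shows "f (w + complex_of_real r * cis t0) = m"
proof (rule ccontr)
  define \<gamma> where "\<gamma> = (\<lambda>t. w + complex_of_real r * cis t)"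
  assume "f (w + complex_of_real r * cis t0) \<noteq> m"
  moreover have "m \<le> f (\<gamma> t0)" using ge sub unfolding \<gamma>_def by blast
  ultimately have gt: "m < f (\<gamma> t0)" unfolding \<gamma>_def by linarith
  define c where "c = (m + f (\<gamma> t0)) / 2"
  have "c < f (\<gamma> t0)" "m < c" using gt unfolding c_def by auto
  then obtain d where d: "d > 0" "\<forall>y\<in>U. dist y (\<gamma> t0) < d \<longrightarrow> c < f y"
    using lsc[of "\<gamma> t0" c] sub unfolding \<gamma>_def by blast
  have "continuous_on {0..2*pi} \<gamma>" unfolding \<gamma>_def by (intro continuous_intros)
  then obtain e where e: "e > 0" "\<forall>s\<in>{0..2*pi}. dist s t0 < e \<longrightarrow> dist (\<gamma> s) (\<gamma> t0) < d"
    using t0 d(1) unfolding continuous_on_iff by blast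
  define a where "a = max 0 (t0 - e/2)"
  define b where "b = min (2*pi) (t0 + e/2)"
  have ab: "a < b" "{a..b} \<subseteq> {0..2*pi}" using t0 e(1) pi_gt_zero unfolding a_def b_def by auto
  have onab: "c < f (\<gamma> s)" if "s \<in> {a..b}" for s
  proof -
    have "s \<in> {0..2*pi}" "dist s t0 < e" using that ab e(1) unfolding a_def b_def dist_real_def by auto
    then have "dist (\<gamma> s) (\<gamma> t0) < d" using e by blast
    then show ?thesis using d sub unfolding \<gamma>_def by blast
  qed
  define g where "g = (\<lambda>s. f (\<gamma> s) - m)"
  have intg: "g integrable_on {0..2*pi}" unfolding g_def \<gamma>_def
    using int by (intro integrable_diff) auto
  have intgab: "g integrable_on {a..b}" using integrable_on_subinterval[OF intg ab(2)] .
  have "integral {0..2*pi} g = integral {0..2*pi} (\<lambda>s. f (\<gamma> s)) - integral {0..2*pi} (\<lambda>s. m)"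
    unfolding g_def \<gamma>_def using int by (intro integral_diff) auto
  also have "\<dots> = integral {0..2*pi} (\<lambda>s. f (\<gamma> s)) - 2*pi*m" using pi_gt_zero by simp
  also have "\<dots> \<le> 0" using mean pi_gt_zero unfolding \<gamma>_def by (simp add: field_simps)
  finally have I0: "integral {0..2*pi} g \<le> 0" .
  have "integral {a..b} (\<lambda>s. c - m) \<le> integral {a..b} g"
    using intgab onab unfolding g_def by (intro integral_le) (auto simp: less_imp_le)
  moreover have "integral {a..b} (\<lambda>s. c - m) = (b - a) * (c - m)" using ab by simp
  moreover have "(b - a) * (c - m) > 0" using ab \<open>m < c\<close> by simp
  moreover have "integral {a..b} g \<le> integral {0..2*pi} g"
    using ab intg intgab ge sub unfolding g_def \<gamma>_def by (intro integral_subset_le) auto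
  ultimately show False using I0 by linarith
qed

lemma circle_rep:
  assumes "u \<noteq> w"
  shows "\<exists>t\<in>{0..2*pi}. u = w + complex_of_real (cmod (u - w)) * cis t"
proof -
  have "0 \<le> Arg2pi (u - w)" "Arg2pi (u - w) < 2*pi" "is_Arg (u - w) (Arg2pi (u - w))"
    using Arg2pi by auto
  then have "u - w = complex_of_real (cmod (u - w)) * cis (Arg2pi (u - w))"
    unfolding is_Arg_def by (simp add: cis_conv_exp)
  then show ?thesis using \<open>0 \<le> Arg2pi (u - w)\<close> \<open>Arg2pi (u - w) < 2*pi\<close>
    by (intro bexI[of _ "Arg2pi (u - w)"]) (auto simp: algebra_simps)
qed

lemma min_principle:
  fixes f :: "complex \<Rightarrow> real"
  assumes opU: "open U" and conU: "connected U" and bU: "bounded U"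
    and bdd: "bdd_below (f ` U)"
    and lsc: "\<And>x c. x \<in> U \<Longrightarrow> c < f x \<Longrightarrow> \<exists>d>0. \<forall>y\<in>U. dist y x < d \<longrightarrow> c < f y"
    and mean: "\<And>w. w \<in> U \<Longrightarrow> \<exists>\<rho>>0. \<forall>r. 0 < r \<and> r < \<rho> \<longrightarrow>
        (\<lambda>t. f (w + complex_of_real r * cis t)) integrable_on {0..2*pi} \<and>
        (1/(2*pi)) * integral {0..2*pi} (\<lambda>t. f (w + complex_of_real r * cis t)) \<le> f w"
    and bdry: "\<And>\<zeta> \<epsilon>. \<zeta> \<in> frontier U \<Longrightarrow> \<epsilon> > 0 \<Longrightarrow> \<exists>d>0. \<forall>y\<in>U. dist y \<zeta> < d \<longrightarrow> -\<epsilon> < f y"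
    and w0: "w0 \<in> U"
  shows "0 \<le> f w0"
proof (rule ccontr)
  assume "\<not> 0 \<le> f w0"
  define m where "m = Inf (f ` U)"
  have mle: "m \<le> f x" if "x \<in> U" for x
    unfolding m_def using bdd that by (intro cInf_lower) auto
  have mneg: "m < 0" using mle[OF w0] \<open>\<not> 0 \<le> f w0\<close> by linarith
  have "\<exists>x\<in>U. f x < m + 1 / (real n + 1)" for n
  proof -
    have "Inf (f ` U) < m + 1 / (real n + 1)" unfolding m_def by simp
    then show ?thesis using w0 by (subst (asm) cInf_less_iff) (auto simp: bdd)
  qed
  then obtain x where x: "\<And>n. x n \<in> U" "\<And>n. f (x n) < m + 1 / (real n + 1)" by metis
  have "compact (closure U)" using bU by simp
  then have "seq_compact (closure U)" by (rule compact_imp_seq_compact)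
  moreover have "\<forall>n. x n \<in> closure U" using x(1) closure_subset by blast
  ultimately obtain l r where lr: "l \<in> closure U" "strict_mono r" "(x \<circ> r) \<longlonglongrightarrow> l"
    by (rule seq_compactE)
  have approx: "\<exists>n. dist (x (r n)) l < d \<and> f (x (r n)) < m + \<eta>" if "d > 0" "\<eta> > 0" for d \<eta>
  proof -
    obtain N1 where N1: "\<forall>n\<ge>N1. dist ((x \<circ> r) n) l < d" using lr(3) \<open>d > 0\<close>
      unfolding lim_sequentially by blast
    obtain N2 where N2: "inverse (real (Suc N2)) < \<eta>" using \<open>\<eta> > 0\<close> reals_Archimedean by blast
    define n where "n = max N1 N2"
    have "n \<le> r n" using lr(2) by (rule seq_suble)
    then have "1 / (real (r n) + 1) \<le> 1 / (real N2 + 1)" unfolding n_def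
      by (intro divide_left_mono) auto
    also have "\<dots> < \<eta>" using N2 by (simp add: inverse_eq_divide add.commute)
    finally have "f (x (r n)) < m + \<eta>" using x(2)[of "r n"] by linarith
    moreover have "dist (x (r n)) l < d" using N1 unfolding n_def by auto
    ultimately show ?thesis by blast
  qed
  have lU: "l \<in> U"
  proof (rule ccontr)
    assume "l \<notin> U"
    then have "l \<in> frontier U" using lr(1) opU by (simp add: frontier_def interior_open)
    then obtain d where d: "d > 0" "\<forall>y\<in>U. dist y l < d \<longrightarrow> m/2 < f y"
      using bdry[of l "-m/2"] mneg by auto
    obtain n where "dist (x (r n)) l < d" "f (x (r n)) < m + (-m/2)" using approx[OF d(1), of "-m/2"] mneg by auto
    then show False using d(2) x(1)[of "r n"] by auto
  qed
  have flm: "f l = m"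
  proof (rule ccontr)
    assume "f l \<noteq> m"
    then have "m < f l" using mle[OF lU] by simp
    then obtain d where d: "d > 0" "\<forall>y\<in>U. dist y l < d \<longrightarrow> (m + f l)/2 < f y"
      using lsc[OF lU, of "(m + f l)/2"] by auto
    obtain n where "dist (x (r n)) l < d" "f (x (r n)) < m + (f l - m)/2"
      using approx[OF d(1), of "(f l - m)/2"] \<open>m < f l\<close> by auto
    then show False using d(2) x(1)[of "r n"] by (auto simp: field_simps)
  qed
  define M where "M = {w \<in> U. f w = m}"
  have "open M" unfolding open_contains_ball
  proof
    fix w assume "w \<in> M"
    then have wU: "w \<in> U" and fw: "f w = m" unfolding M_def by auto
    obtain \<rho> where \<rho>: "\<rho> > 0" "\<forall>r. 0 < r \<and> r < \<rho> \<longrightarrow>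
        (\<lambda>t. f (w + complex_of_real r * cis t)) integrable_on {0..2*pi} \<and>
        (1/(2*pi)) * integral {0..2*pi} (\<lambda>t. f (w + complex_of_real r * cis t)) \<le> f w"
      using mean[OF wU] by blast
    obtain \<rho>U where \<rho>U: "\<rho>U > 0" "ball w \<rho>U \<subseteq> U" using opU wU open_contains_ball by blast
    have "ball w (min \<rho> \<rho>U) \<subseteq> M"
    proof
      fix u assume u: "u \<in> ball w (min \<rho> \<rho>U)"
      show "u \<in> M"
      proof (cases "u = w")
        case True then show ?thesis using \<open>w \<in> M\<close> by simp
      next
        case False
        define rr where "rr = cmod (u - w)"
        have rr: "0 < rr" "rr < \<rho>" "rr < \<rho>U" using u False unfolding rr_def
          by (auto simp: dist_norm norm_minus_commute)
        obtain t where t: "t \<in> {0..2*pi}" "u = w + complex_of_real rr * cis t"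
          using circle_rep[OF False] unfolding rr_def by blast
        have sub: "w + complex_of_real rr * cis s \<in> U" for s
          using \<rho>U(2) rr by (auto simp: dist_norm norm_mult)
        have "f (w + complex_of_real rr * cis t) = m"
          using \<rho>(2) rr fw
          by (intro circle_const[where U=U and f=f and r=rr and w=w, OF rr(1) sub mle lsc _ _ t(1)]) auto
        then show ?thesis using t sub unfolding M_def by auto
      qed
    qed
    then show "\<exists>e>0. ball w e \<subseteq> M" using \<rho>(1) \<rho>U(1) by (intro exI[of _ "min \<rho> \<rho>U"]) auto
  qed
  have "open (U - M)" unfolding open_contains_ball
  proof
    fix w assume "w \<in> U - M"
    then have wU: "w \<in> U" and "m < f w" using mle unfolding M_def by force+
    then obtain d where d: "d > 0" "\<forall>y\<in>U. dist y w < d \<longrightarrow> m < f y" using lsc by blast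
    obtain \<rho>U where \<rho>U: "\<rho>U > 0" "ball w \<rho>U \<subseteq> U" using opU wU open_contains_ball by blast
    have "ball w (min d \<rho>U) \<subseteq> U - M" using d \<rho>U unfolding M_def by (auto simp: dist_commute)
    then show "\<exists>e>0. ball w e \<subseteq> U - M" using d(1) \<rho>U(1) by (intro exI[of _ "min d \<rho>U"]) auto
  qed
  have "M \<inter> U = {} \<or> (U - M) \<inter> U = {}"
    by (rule connectedD[OF conU \<open>open M\<close> \<open>open (U - M)\<close>]) (auto simp: M_def)
  moreover have "l \<in> M \<inter> U" using lU flm unfolding M_def by auto
  ultimately have allm: "\<And>y. y \<in> U \<Longrightarrow> f y = m" unfolding M_def by blast
  have "U \<noteq> {}" "U \<noteq> UNIV" using w0 bU not_bounded_UNIV by auto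
  then obtain \<zeta> where \<zeta>: "\<zeta> \<in> frontier U" using frontier_eq_empty by blast
  then obtain d where d: "d > 0" "\<forall>y\<in>U. dist y \<zeta> < d \<longrightarrow> m/2 < f y"
    using bdry[of \<zeta> "-m/2"] mneg by auto
  have "\<zeta> \<in> closure U" using \<zeta> by (simp add: frontier_def)
  then obtain y where "y \<in> U" "dist y \<zeta> < d" using d(1) closure_approachable by blast
  then show False using d(2) allm mneg by fastforce
qed


lemma U_eq:
  assumes "0 < R1"
  shows "({w. R1 < cmod w \<and> cmod w < R2} - {complex_of_real x | x. - R2 < x \<and> x < - R1})
    = {w. R1 < cmod w \<and> cmod w < R2 \<and> (0 < Re w \<or> Im w \<noteq> 0)}"
proof (intro set_eqI iffI)
  fix w assume "w \<in> {w. R1 < cmod w \<and> cmod w < R2} - {complex_of_real x | x. - R2 < x \<and> x < - R1}"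
  then have w: "R1 < cmod w" "cmod w < R2" "\<And>x. - R2 < x \<Longrightarrow> x < - R1 \<Longrightarrow> w \<noteq> complex_of_real x" by auto
  show "w \<in> {w. R1 < cmod w \<and> cmod w < R2 \<and> (0 < Re w \<or> Im w \<noteq> 0)}"
  proof (rule ccontr)
    assume "\<not> ?thesis"
    then have "Re w \<le> 0" "Im w = 0" using w by auto
    then have "w = complex_of_real (Re w)" "cmod w = - Re w" by (auto simp: complex_eq_iff cmod_def)
    then show False using w by force
  qed
next
  fix w assume "w \<in> {w. R1 < cmod w \<and> cmod w < R2 \<and> (0 < Re w \<or> Im w \<noteq> 0)}"
  then have w: "R1 < cmod w" "cmod w < R2" "0 < Re w \<or> Im w \<noteq> 0" by auto
  have "w \<noteq> complex_of_real x" if "- R2 < x" "x < - R1" for x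
    using that w assms by auto
  then show "w \<in> {w. R1 < cmod w \<and> cmod w < R2} - {complex_of_real x | x. - R2 < x \<and> x < - R1}"
    using w by auto
qed

lemma U_open: "open {w. R1 < cmod w \<and> cmod w < R2 \<and> (0 < Re w \<or> Im w \<noteq> 0)}"
  by (intro open_Collect_conj open_Collect_disj open_Collect_less open_Collect_neq continuous_intros)

lemma U_bounded: "bounded {w. R1 < cmod w \<and> cmod w < R2 \<and> (0 < Re w \<or> Im w \<noteq> 0)}"
  by (rule bounded_subset[OF bounded_ball[of 0 R2]]) auto

lemma U_closure:
  "closure {w. R1 < cmod w \<and> cmod w < R2 \<and> (0 < Re w \<or> Im w \<noteq> 0)} \<subseteq> {w. R1 \<le> cmod w \<and> cmod w \<le> R2}"
  by (intro closure_minimal closed_Collect_conj closed_Collect_le continuous_intros) auto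

lemma U_connected:
  assumes "0 < R1"
  shows "connected {w. R1 < cmod w \<and> cmod w < R2 \<and> (0 < Re w \<or> Im w \<noteq> 0)}"
proof -
  define \<Phi> where "\<Phi> = (\<lambda>p::real\<times>real. complex_of_real (fst p) * cis (snd p))"
  have "connected ({R1<..<R2} \<times> {-pi<..<pi})"
    by (intro connected_Times) (auto intro: is_interval_connected simp: is_interval_convex_1)
  moreover have "continuous_on ({R1<..<R2} \<times> {-pi<..<pi}) \<Phi>" unfolding \<Phi>_def
    by (intro continuous_intros)
  ultimately have c: "connected (\<Phi> ` ({R1<..<R2} \<times> {-pi<..<pi}))" using connected_continuous_image by blast
  have "\<Phi> ` ({R1<..<R2} \<times> {-pi<..<pi}) = {w. R1 < cmod w \<and> cmod w < R2 \<and> (0 < Re w \<or> Im w \<noteq> 0)}"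
  proof (intro set_eqI iffI)
    fix w assume "w \<in> \<Phi> ` ({R1<..<R2} \<times> {-pi<..<pi})"
    then obtain \<rho> \<theta> where p: "R1 < \<rho>" "\<rho> < R2" "-pi < \<theta>" "\<theta> < pi" "w = complex_of_real \<rho> * cis \<theta>"
      unfolding \<Phi>_def by auto
    have "cmod w = \<rho>" using p assms by (simp add: norm_mult)
    moreover have "0 < Re w \<or> Im w \<noteq> 0"
    proof (cases "sin \<theta> = 0")
      case True
      then have "\<theta> = 0" using sin_eq_0_pi p by blast
      then show ?thesis using p assms by simp
    next
      case False
      then show ?thesis using p assms by simp
    qed
    ultimately show "w \<in> {w. R1 < cmod w \<and> cmod w < R2 \<and> (0 < Re w \<or> Im w \<noteq> 0)}" using p by simp
  next
    fix w assume w: "w \<in> {w. R1 < cmod w \<and> cmod w < R2 \<and> (0 < Re w \<or> Im w \<noteq> 0)}"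
    then have "w \<noteq> 0" using assms by auto
    have "Arg w \<noteq> pi" using w Arg_eq_pi by auto
    then have "-pi < Arg w" "Arg w < pi" using mpi_less_Arg Arg_le_pi by (auto intro: order.not_eq_order_implies_strict)
    moreover have "w = complex_of_real (cmod w) * cis (Arg w)"
      using \<open>w \<noteq> 0\<close> by (simp add: cis_Arg complex_sgn_def scaleR_conv_of_real)
    ultimately show "w \<in> \<Phi> ` ({R1<..<R2} \<times> {-pi<..<pi})" unfolding \<Phi>_def using w
      by (intro image_eqI[of _ _ "(cmod w, Arg w)"]) auto
  qed
  then show ?thesis using c by simp
qed


definition hh :: "real \<Rightarrow> real \<Rightarrow> complex \<Rightarrow> real" where
  "hh R1 R2 w = sqrt ((cmod w + Re w) / 2) * (1 - R1 / cmod w) / sqrt R2"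

lemma hh_Re:
  assumes "w \<noteq> 0"
  shows "hh R1 R2 w = Re (csqrt w - complex_of_real R1 / csqrt w) / sqrt R2"
proof -
  have n: "(cmod (csqrt w))\<^sup>2 = cmod w" by simp
  have n': "(Re (csqrt w))\<^sup>2 + (Im (csqrt w))\<^sup>2 = cmod w" using n by (metis cmod_power2)
  have "Re (complex_of_real R1 / csqrt w) = R1 * Re (csqrt w) / ((Re (csqrt w))\<^sup>2 + (Im (csqrt w))\<^sup>2)"
    by (simp only: Re_divide Re_complex_of_real Im_complex_of_real mult_zero_left add_0_right)
  also have "\<dots> = R1 * Re (csqrt w) / cmod w" by (simp only: n')
  also have "\<dots> = R1 * sqrt ((cmod w + Re w) / 2) / cmod w" by simp
  finally have "Re (csqrt w - complex_of_real R1 / csqrt w) = sqrt ((cmod w + Re w) / 2) - R1 * sqrt ((cmod w + Re w) / 2) / cmod w"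
    by simp
  moreover have "sqrt ((cmod w + Re w) / 2) * (1 - R1 / cmod w) = sqrt ((cmod w + Re w) / 2) - R1 * sqrt ((cmod w + Re w) / 2) / cmod w"
    by (simp add: algebra_simps)
  ultimately show ?thesis unfolding hh_def by simp
qed

lemma hh_cont: "0 < R2 \<Longrightarrow> continuous_on {w. w \<noteq> 0} (hh R1 R2)"
  unfolding hh_def by (intro continuous_intros) auto

lemma hh_le1:
  assumes "0 < cmod w" "cmod w \<le> R2" "0 \<le> R1"
  shows "hh R1 R2 w \<le> 1"
proof -
  have a0: "0 \<le> sqrt ((cmod w + Re w) / 2)" using complex_Re_le_cmod[of w] abs_le_D2[OF abs_Re_le_cmod[of w]] by simp
  have "(cmod w + Re w) / 2 \<le> R2" using complex_Re_le_cmod[of w] assms by simp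
  then have a1: "sqrt ((cmod w + Re w) / 2) \<le> sqrt R2" by simp
  have b1: "1 - R1 / cmod w \<le> 1" using assms by simp
  have "sqrt ((cmod w + Re w) / 2) * (1 - R1 / cmod w) \<le> sqrt R2"
  proof (cases "0 \<le> 1 - R1 / cmod w")
    case True
    then have "sqrt ((cmod w + Re w) / 2) * (1 - R1 / cmod w) \<le> sqrt ((cmod w + Re w) / 2) * 1"
      using a0 b1 by (intro mult_left_mono) auto
    then show ?thesis using a1 by linarith
  next
    case False
    then have "sqrt ((cmod w + Re w) / 2) * (1 - R1 / cmod w) \<le> 0" using a0 by (simp add: mult_nonneg_nonpos)
    then show ?thesis using a0 a1 by linarith
  qed
  moreover have "0 < R2" using assms(1,2) by linarith
  then have "0 < sqrt R2" by simp
  ultimately show ?thesis unfolding hh_def by simp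
qed

lemma hh_boundary:
  assumes R: "0 < R1" "R1 < R2"
    and \<zeta>1: "R1 \<le> cmod \<zeta>" "cmod \<zeta> \<le> R2"
    and \<zeta>2: "\<zeta> \<notin> {w. R1 < cmod w \<and> cmod w < R2 \<and> (0 < Re w \<or> Im w \<noteq> 0)}"
  shows "hh R1 R2 \<zeta> \<le> indicator {w. cmod w = R2} \<zeta>"
proof (cases "cmod \<zeta> = R2")
  case True
  then show ?thesis using hh_le1[of \<zeta> R2 R1] R by simp
next
  case False
  then have "cmod \<zeta> = R1 \<or> (Re \<zeta> \<le> 0 \<and> Im \<zeta> = 0)" using \<zeta>1 \<zeta>2 by auto
  then have "hh R1 R2 \<zeta> = 0"
  proof
    assume "cmod \<zeta> = R1" then show ?thesis unfolding hh_def using R by simp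
  next
    assume "Re \<zeta> \<le> 0 \<and> Im \<zeta> = 0"
    then have "cmod \<zeta> + Re \<zeta> = 0" by (simp add: cmod_def)
    then show ?thesis unfolding hh_def by simp
  qed
  then show ?thesis by simp
qed

lemma hh_z:
  assumes R: "0 < R1" "R1 < R" "0 < R2" and z: "cmod z = R" "0 \<le> Re z"
  shows "sqrt (R/2) * (1 - R1/R) / sqrt R2 \<le> hh R1 R2 z"
proof -
  have "sqrt (R/2) \<le> sqrt ((cmod z + Re z) / 2)" using z by simp
  moreover have "0 \<le> 1 - R1/R" using R by simp
  ultimately have "sqrt (R/2) * (1 - R1/R) \<le> sqrt ((cmod z + Re z) / 2) * (1 - R1/R)"
    by (intro mult_right_mono) auto
  then have "sqrt (R/2) * (1 - R1/R) \<le> sqrt ((cmod z + Re z) / 2) * (1 - R1/cmod z)"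
    using z by simp
  then show ?thesis unfolding hh_def using R by (simp add: divide_right_mono)
qed


theorem lemma4p2:
  fixes R1 R :: real
  assumes "0 < R1" and "R1 < R"
  shows "\<exists>C>0. \<forall>R2 z. R < R2 \<longrightarrow> cmod z = R \<longrightarrow> 0 \<le> Re z \<longrightarrow>
           harmonic_measure z {w. cmod w = R2}
             ({w. R1 < cmod w \<and> cmod w < R2} - {complex_of_real x | x. - R2 < x \<and> x < - R1})
           \<ge> C / sqrt R2"
proof -
  define C where "C = sqrt (R/2) * (1 - R1/R)"
  have Cpos: "C > 0" using assms by (simp add: C_def)
  have "\<forall>R2 z. R < R2 \<longrightarrow> cmod z = R \<longrightarrow> 0 \<le> Re z \<longrightarrow>
           harmonic_measure z {w. cmod w = R2}
             ({w. R1 < cmod w \<and> cmod w < R2} - {complex_of_real x | x. - R2 < x \<and> x < - R1})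
           \<ge> C / sqrt R2"
  proof (intro allI impI)
    fix R2 z assume R2: "R < R2" and z: "cmod z = R" "0 \<le> Re z"
    define U where "U = {w. R1 < cmod w \<and> cmod w < R2 \<and> (0 < Re w \<or> Im w \<noteq> 0)}"
    have Ueq: "({w. R1 < cmod w \<and> cmod w < R2} - {complex_of_real x | x. - R2 < x \<and> x < - R1}) = U"
      using U_eq[OF assms(1)] unfolding U_def by blast
    define E where "E = {w. cmod w = R2}"
    define h where "h = hh R1 R2"
    have R2pos: "0 < R2" using assms R2 by linarith
    have opU: "open U" unfolding U_def by (rule U_open)
    have conU: "connected U" unfolding U_def by (rule U_connected[OF assms(1)])
    have bU: "bounded U" unfolding U_def by (rule U_bounded)
    have "z \<noteq> 0" using z assms by auto
    then have "0 < Re z \<or> Im z \<noteq> 0" using z(2) by (auto simp: complex_eq_iff)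
    then have zU: "z \<in> U" unfolding U_def using z assms R2 by auto
    have U0: "\<And>w. w \<in> U \<Longrightarrow> w \<noteq> 0" unfolding U_def using assms by auto
    have hle1: "\<And>w. w \<in> U \<Longrightarrow> h w \<le> 1" unfolding h_def U_def
      using assms by (intro hh_le1) auto
    have hcont: "\<forall>x\<in>{w. w \<noteq> 0}. \<forall>e>0. \<exists>d>0. \<forall>x'\<in>{w. w \<noteq> 0}. dist x' x < d \<longrightarrow> dist (h x') (h x) < e"
      using hh_cont[OF R2pos, of R1] unfolding h_def continuous_on_iff by blast
    have hz: "C / sqrt R2 \<le> h z" unfolding h_def C_def using hh_z[OF assms R2pos z] .
    have main: "C / sqrt R2 \<le> v z"
      if vb: "bounded (v ` U)" and vs: "superharmonic_on U v"
        and vbd: "\<forall>\<zeta>\<in>frontier U. \<forall>\<epsilon>>0. \<forall>\<^sub>F w in at \<zeta> within U. indicator E \<zeta> - \<epsilon> < v w" for v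
    proof -
      obtain B where B: "\<And>w. w \<in> U \<Longrightarrow> \<bar>v w\<bar> \<le> B" using vb unfolding bounded_iff by auto
      have vlsc: "\<exists>d>0. \<forall>y\<in>U. dist y x < d \<longrightarrow> c < v y" if "x \<in> U" "c < v x" for x c
      proof -
        have "\<forall>\<^sub>F y in at x within U. c < v y" using vs that unfolding superharmonic_on_def lsc_on_def by blast
        then obtain d where "d > 0" "\<forall>y\<in>U. y \<noteq> x \<and> dist y x < d \<longrightarrow> c < v y"
          unfolding eventually_at by blast
        then show ?thesis using that by metis
      qed
      define f where "f = (\<lambda>w. v w - h w)"
      have "0 \<le> f z"
      proof (rule min_principle[OF opU conU bU _ _ _ _ zU])
        show "bdd_below (f ` U)" unfolding f_def
          by (rule bdd_belowI2[of _ "-B-1"]) (use B hle1 in force)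
        show "\<exists>d>0. \<forall>y\<in>U. dist y x < d \<longrightarrow> c < f y" if xU: "x \<in> U" "c < f x" for x c
        proof -
          have apos: "0 < (v x - h x - c) / 2" using xU unfolding f_def by simp
          have lt: "v x - (v x - h x - c) / 2 < v x" using apos by linarith
          obtain d1 where d1: "d1 > 0" "\<forall>y\<in>U. dist y x < d1 \<longrightarrow> v x - (v x - h x - c) / 2 < v y"
            using vlsc[OF xU(1) lt] by (elim exE conjE) (rule that)
          have x0: "x \<in> {w. w \<noteq> 0}" using U0[OF xU(1)] by simp
          obtain d2 where d2: "d2 > 0" "\<forall>y\<in>{w. w \<noteq> 0}. dist y x < d2 \<longrightarrow> dist (h y) (h x) < (v x - h x - c) / 2"
            using hcont[rule_format, OF x0 apos] by (elim exE conjE) (rule that)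
          have "\<forall>y\<in>U. dist y x < min d1 d2 \<longrightarrow> c < f y"
          proof (intro ballI impI)
            fix y assume yU: "y \<in> U" "dist y x < min d1 d2"
            have A: "v x - (v x - h x - c) / 2 < v y" using d1 yU by auto
            have "dist (h y) (h x) < (v x - h x - c) / 2" using d2 yU U0 by auto
            then have B: "h y - h x < (v x - h x - c) / 2" unfolding dist_real_def by linarith
            have "c < v y - h y" using A B by (simp add: field_simps)
            then show "c < f y" unfolding f_def by simp
          qed
          then show ?thesis using d1 d2 by (intro exI[of _ "min d1 d2"]) auto
        qed
        show "\<exists>\<rho>>0. \<forall>r. 0 < r \<and> r < \<rho> \<longrightarrow>
            (\<lambda>t. f (w + complex_of_real r * cis t)) integrable_on {0..2*pi} \<and>
            (1/(2*pi)) * integral {0..2*pi} (\<lambda>t. f (w + complex_of_real r * cis t)) \<le> f w"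
          if wU: "w \<in> U" for w
        proof -
          obtain \<rho> where \<rho>: "\<rho> > 0" "\<forall>r. 0 < r \<and> r < \<rho> \<longrightarrow>
              v w \<ge> (1 / (2 * pi)) * integral {0..2*pi} (\<lambda>t. v (w + complex_of_real r * cis t))"
            using vs wU unfolding superharmonic_on_def by blast
          obtain \<rho>U where \<rho>U: "\<rho>U > 0" "ball w \<rho>U \<subseteq> U" using opU wU open_contains_ball by blast
          have "\<forall>r. 0 < r \<and> r < min \<rho> \<rho>U \<longrightarrow>
            (\<lambda>t. f (w + complex_of_real r * cis t)) integrable_on {0..2*pi} \<and>
            (1/(2*pi)) * integral {0..2*pi} (\<lambda>t. f (w + complex_of_real r * cis t)) \<le> f w"
          proof (intro allI impI)
            fix r assume r: "0 < r \<and> r < min \<rho> \<rho>U"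
            define \<gamma> where "\<gamma> = (\<lambda>t. w + complex_of_real r * cis t)"
            have circ: "\<gamma> t \<in> U" for t using \<rho>U r unfolding \<gamma>_def by (auto simp: dist_norm norm_mult)
            have cb: "cball w r \<subseteq> U" using \<rho>U r by (auto simp: subset_eq)
            define g where "g = (\<lambda>u. csqrt u - complex_of_real R1 / csqrt u)"
            have hol: "g holomorphic_on U" unfolding g_def
              using U0 by (intro holomorphic_intros) (auto simp: U_def complex_nonpos_Reals_iff)
            have "((\<lambda>t. Re (g (\<gamma> t))) has_integral (2*pi*Re (g w))) {0..2*pi}"
              unfolding \<gamma>_def using mean_value_Re[OF hol opU cb] r by simp
            then have "((\<lambda>t. Re (g (\<gamma> t)) * (1 / sqrt R2)) has_integral (2*pi*Re (g w) * (1 / sqrt R2))) {0..2*pi}"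
              by (rule has_integral_mult_left)
            moreover have "(\<lambda>t. Re (g (\<gamma> t)) * (1 / sqrt R2)) = (\<lambda>t. h (\<gamma> t))"
              using circ U0 unfolding h_def g_def by (auto simp: hh_Re)
            moreover have "2*pi*Re (g w) * (1 / sqrt R2) = 2*pi*h w"
              using wU U0 unfolding h_def g_def by (auto simp: hh_Re)
            ultimately have hint: "((\<lambda>t. h (\<gamma> t)) has_integral 2*pi*h w) {0..2*pi}" by simp
            have gcont: "continuous_on {0..2*pi} \<gamma>" unfolding \<gamma>_def by (intro continuous_intros)
            have vint: "(\<lambda>t. v (\<gamma> t)) integrable_on {0..2*pi}"
            proof (rule lsc_integrable)
              show "\<bar>v (\<gamma> t)\<bar> \<le> B" for t using B circ by blast
              show "\<exists>d>0. \<forall>s\<in>{0..2*pi}. dist s t < d \<longrightarrow> c < v (\<gamma> s)" if tc: "t \<in> {0..2*pi}" "c < v (\<gamma> t)" for t c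
              proof -
                obtain d where d: "d > 0" "\<forall>y\<in>U. dist y (\<gamma> t) < d \<longrightarrow> c < v y" using vlsc[OF circ tc(2)] by blast
                obtain e where e: "e > 0" "\<forall>s\<in>{0..2*pi}. dist s t < e \<longrightarrow> dist (\<gamma> s) (\<gamma> t) < d"
                  using gcont tc(1) d(1) unfolding continuous_on_iff by blast
                show ?thesis using d e circ by (intro exI[of _ e]) auto
              qed
            qed
            have fint: "((\<lambda>t. f (\<gamma> t)) has_integral integral {0..2*pi} (\<lambda>t. v (\<gamma> t)) - 2*pi*h w) {0..2*pi}"
              unfolding f_def using vint hint by (intro has_integral_diff) auto
            have "(1/(2*pi)) * integral {0..2*pi} (\<lambda>t. f (\<gamma> t)) = (1/(2*pi)) * integral {0..2*pi} (\<lambda>t. v (\<gamma> t)) - h w"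
              using integral_unique[OF fint] by (simp add: field_simps)
            also have "\<dots> \<le> f w" using \<rho>(2) r unfolding f_def \<gamma>_def by auto
            finally show "(\<lambda>t. f (w + complex_of_real r * cis t)) integrable_on {0..2*pi} \<and>
              (1/(2*pi)) * integral {0..2*pi} (\<lambda>t. f (w + complex_of_real r * cis t)) \<le> f w"
              using fint unfolding \<gamma>_def by blast
          qed
          then show ?thesis using \<rho>(1) \<rho>U(1) by (intro exI[of _ "min \<rho> \<rho>U"]) auto
        qed
        show "\<exists>d>0. \<forall>y\<in>U. dist y \<zeta> < d \<longrightarrow> -\<epsilon> < f y" if ze: "\<zeta> \<in> frontier U" "\<epsilon> > 0" for \<zeta> \<epsilon>
        proof -
          have "\<zeta> \<in> closure U" "\<zeta> \<notin> U" using that(1) opU by (auto simp: frontier_def interior_open)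
          then have z1: "R1 \<le> cmod \<zeta>" "cmod \<zeta> \<le> R2" using U_closure[of R1 R2] unfolding U_def by auto
          have hb: "h \<zeta> \<le> indicator E \<zeta>" unfolding h_def E_def
            using hh_boundary[OF assms(1) _ z1] \<open>\<zeta> \<notin> U\<close> assms R2 unfolding U_def by auto
          have "\<forall>\<^sub>F w in at \<zeta> within U. indicator E \<zeta> - \<epsilon>/2 < v w" using vbd that by auto
          then obtain d1 where d1: "d1 > 0" "\<forall>y\<in>U. y \<noteq> \<zeta> \<and> dist y \<zeta> < d1 \<longrightarrow> indicator E \<zeta> - \<epsilon>/2 < v y"
            unfolding eventually_at by blast
          have \<zeta>0: "\<zeta> \<in> {w. w \<noteq> 0}" using z1 assms by auto
          have e2: "\<epsilon>/2 > 0" using ze(2) by simp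
          obtain d2 where d2: "d2 > 0" "\<forall>y\<in>{w. w \<noteq> 0}. dist y \<zeta> < d2 \<longrightarrow> dist (h y) (h \<zeta>) < \<epsilon>/2"
            using hcont[rule_format, OF \<zeta>0 e2] by (elim exE conjE) (rule that)
          have "\<forall>y\<in>U. dist y \<zeta> < min d1 d2 \<longrightarrow> -\<epsilon> < f y"
          proof (intro ballI impI)
            fix y assume y: "y \<in> U" "dist y \<zeta> < min d1 d2"
            then have "indicator E \<zeta> - \<epsilon>/2 < v y" "dist (h y) (h \<zeta>) < \<epsilon>/2"
              using d1 d2 U0 \<open>\<zeta> \<notin> U\<close> by auto
            then have P1: "indicator E \<zeta> - \<epsilon>/2 < v y" and P2: "\<bar>h y - h \<zeta>\<bar> < \<epsilon>/2"
              unfolding dist_real_def by auto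
            have "h y - h \<zeta> < \<epsilon>/2" using P2 by (rule le_less_trans[OF abs_ge_self])
            with P1 have "indicator E \<zeta> - \<epsilon>/2 < v y" "h y - h \<zeta> < \<epsilon>/2" by auto
            then show "-\<epsilon> < f y" using hb unfolding f_def by linarith
          qed
          then show ?thesis using d1 d2 by (intro exI[of _ "min d1 d2"]) auto
        qed
      qed
      then show ?thesis using hz unfolding f_def by simp
    qed
    have ne: "{v z | v. bounded (v ` U) \<and> superharmonic_on U v \<and>
     (\<forall>\<zeta>\<in>frontier U. \<forall>\<epsilon>>0. \<forall>\<^sub>F w in at \<zeta> within U. indicator E \<zeta> - \<epsilon> < v w)} \<noteq> {}"
    proof -
      have "bounded ((\<lambda>_. 1::real) ` U)" by (auto intro: bounded_subset[OF bounded_ball[of 0 2]])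
      moreover have "superharmonic_on U (\<lambda>_. 1)"
        unfolding superharmonic_on_def lsc_on_def by (auto intro!: exI[of _ 1])
      moreover have "\<forall>\<zeta>\<in>frontier U. \<forall>\<epsilon>>0. \<forall>\<^sub>F w in at \<zeta> within U. indicator E \<zeta> - \<epsilon> < (1::real)"
        by (auto simp: indicator_def)
      ultimately show ?thesis by blast
    qed
    have "C / sqrt R2 \<le> harmonic_measure z E U"
      unfolding harmonic_measure_def using ne main by (intro cInf_greatest) auto
    then show "harmonic_measure z {w. cmod w = R2}
             ({w. R1 < cmod w \<and> cmod w < R2} - {complex_of_real x | x. - R2 < x \<and> x < - R1})
           \<ge> C / sqrt R2" unfolding Ueq E_def by simp
  qed
  then show ?thesis using Cpos by blast
qed

end
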